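(* Let $n\ge4$ be even and $\eta$ a choice function. For every $m\in\mathbb{N}$ and every pair of distinct words $w,v\in\mathcal{A}_n^m$, $\phi^\eta_w((0,1)^2)\cap\phi^\eta_v((0,1)^2)=\emptyset$ and $\phi^\eta_w((0,1)^2)\subset(0,1)^2$.
   Context: Fix an even integer $n\ge4$ and let $\mathcal{A}_n=\{1,\dots,5n-6\}$. $\mathcal{A}_n^m$ is the set of words of length $m$ over $\mathcal{A}_n$ ($\mathcal{A}_n^0=\{\varepsilon\}$), $\mathcal{A}_n^*=\bigcup_{m\ge0}\mathcal{A}_n^m$. Define maps $\psi^1_{n,j},\psi^2_{n,j}:\mathbb{R}^2\to\mathbb{R}^2$, $j\in\mathcal{A}_n$, each of the form $x\mapsto\frac1n x+b$: for $j=1,\dots,4n-4$, $\psi^1_{n,j}=\psi^2_{n,j}$ map $[0,1]^2$ onto the $4n-4$ squares of the grid of $n^2$ closed squares of side $1/n$ in $[0,1]^2$ that meet $\partial[0,1]^2$ (fixed enumeration); for $j=4n-3+i$, $i=0,\dots,\frac n2-2$, $\psi^1_{n,j}(x)=\psi^2_{n,j}(x)=\frac1nx+(\frac12+\frac in,\frac1n)$; for $j=4n+\frac n2-4+i$, $i=0,\dots,\frac n2-2$, $\psi^1_{n,j}(x)=\frac1nx+(\frac{i+1}n,\frac2n)$ and $\psi^2_{n,j}(x)=\frac1nx+(\frac{i+1}n,\frac1n)$. A choice function is any $\eta:\mathcal{A}_n^*\to\{1,2\}$. Set $\phi^\eta_\varepsilon=\mathrm{id}$ and for $w=i_1\cdots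 i_m$, $\phi^\eta_w=\psi^{\eta(\varepsilon)}_{n,i_1}\circ\psi^{\eta(i_1)}_{n,i_2}\circ\cdots\circ\psi^{\eta(i_1\cdots i_{m-1})}_{n,i_m}$. *)

theory Defs
  imports "HOL-Analysis.Analysis"
begin

text \<open>The grid square
  [a/n,(a+1)/n] x [b/n,(b+1)/n] (a, b < n) is indexed by its corner (a,b);
  it meets the boundary of the unit square iff a = 0, a = n-1, b = 0 or b = n-1.\<close>

definition boundary_squares :: "nat \<Rightarrow> (nat \<times> nat) set" where
  "boundary_squares n = {(a,b). a < n \<and> b < n \<and> (a = 0 \<or> a = n - 1 \<or> b = 0 \<or> b = n - 1)}"

definition alphabet :: "nat \<Rightarrow> nat set" where
  "alphabet n = {1..5*n-6}"

text \<open>Translation part of psi^k_{n,j}; e is the fixed enumeration of the boundary squares.\<close>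
definition psi_offset :: "nat \<Rightarrow> (nat \<Rightarrow> nat \<times> nat) \<Rightarrow> nat \<Rightarrow> nat \<Rightarrow> real \<times> real" where
  "psi_offset n e k j =
    (if 1 \<le> j \<and> j \<le> 4*n-4 then (real (fst (e j)) / real n, real (snd (e j)) / real n)
     else if 4*n-3 \<le> j \<and> j \<le> 4*n-3 + (n div 2 - 2) then
       (1/2 + real (j - (4*n-3)) / real n, 1 / real n)
     else if 4*n + n div 2 - 4 \<le> j \<and> j \<le> 4*n + n div 2 - 4 + (n div 2 - 2) then
       (if k = 1 then (real (j - (4*n + n div 2 - 4) + 1) / real n, 2 / real n)
        else (real (j - (4*n + n div 2 - 4) + 1) / real n, 1 / real n))
     else (0, 0))"

definition psi :: "nat \<Rightarrow> (nat \<Rightarrow> nat \<times> nat) \<Rightarrow> nat \<Rightarrow> nat \<Rightarrow> real \<times> real \<Rightarrow> real \<times> real" where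
  "psi n e k j x = (1 / real n) *\<^sub>R x + psi_offset n e k j"

text \<open>phi^eta_w; the recursion shifts eta so that the letter i_{l+1} uses eta(i_1...i_l).\<close>
fun phi :: "nat \<Rightarrow> (nat \<Rightarrow> nat \<times> nat) \<Rightarrow> (nat list \<Rightarrow> nat) \<Rightarrow> nat list \<Rightarrow> real \<times> real \<Rightarrow> real \<times> real" where
  "phi n e \<eta> [] = id"
| "phi n e \<eta> (i # w) = psi n e (\<eta> []) i \<circ> phi n e (\<lambda>u. \<eta> (i # u)) w"

definition open_unit_square :: "(real \<times> real) set" where
  "open_unit_square = {0<..<1} \<times> {0<..<1}"

end

theory Submission
  imports Defs
begin

definition corner :: "nat \<Rightarrow> (nat \<Rightarrow> nat \<times> nat) \<Rightarrow> nat \<Rightarrow> nat \<Rightarrow> nat \<times> nat" where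
  "corner n e k j =
    (if 1 \<le> j \<and> j \<le> 4*n-4 then e j
     else if 4*n-3 \<le> j \<and> j \<le> 4*n-3 + (n div 2 - 2) then (n div 2 + (j - (4*n-3)), 1)
     else if 4*n + n div 2 - 4 \<le> j \<and> j \<le> 4*n + n div 2 - 4 + (n div 2 - 2) then
       (j - (4*n + n div 2 - 4) + 1, if k = 1 then 2 else 1)
     else (0, 0))"

definition cell :: "nat \<Rightarrow> nat \<times> nat \<Rightarrow> (real \<times> real) set" where
  "cell n c = {real (fst c) / real n <..< (real (fst c) + 1) / real n}
            \<times> {real (snd c) / real n <..< (real (snd c) + 1) / real n}"

lemma offset_corner:
  assumes "even n" "n \<ge> 4"
  shows "psi_offset n e k j = (real (fst (corner n e k j)) / real n, real (snd (corner n e k j)) / real n)"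
proof -
  have h: "1/2 + real r / real n = real (n div 2 + r) / real n" for r
  proof -
    obtain q where q: "n = 2*q" using assms(1) by blast
    then have "q > 0" using assms by auto
    then show ?thesis using q by (simp add: field_simps)
  qed
  show ?thesis unfolding psi_offset_def corner_def by (simp add: h del: of_nat_diff)
qed

lemma psi_cell:
  assumes "even n" "n \<ge> 4" "x \<in> open_unit_square"
  shows "psi n e k j x \<in> cell n (corner n e k j)"
proof -
  obtain x1 x2 where x: "x = (x1, x2)" "0 < x1" "x1 < 1" "0 < x2" "x2 < 1"
    using assms(3) unfolding open_unit_square_def by auto
  obtain a b where c: "corner n e k j = (a, b)" by fastforce
  have np: "real n > 0" using assms by auto
  have "psi n e k j x = ((x1 + a) / n, (x2 + b) / n)"
    unfolding psi_def offset_corner[OF assms(1,2)] c x by (simp add: add_divide_distrib)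
  then show ?thesis unfolding cell_def c using x np
    by (simp add: divide_strict_right_mono)
qed

lemma corner_bound:
  assumes "even n" "n \<ge> 4" "bij_betw e {1..4*n-4} (boundary_squares n)" "j \<in> alphabet n"
  shows "fst (corner n e k j) < n \<and> snd (corner n e k j) < n"
proof (cases "1 \<le> j \<and> j \<le> 4*n-4")
  case True
  then have "e j \<in> boundary_squares n" using assms(3) by (auto simp: bij_betw_def)
  then show ?thesis using True unfolding corner_def boundary_squares_def by auto
next
  case False
  then show ?thesis using assms unfolding corner_def alphabet_def by auto
qed

lemma cell_sub:
  assumes "fst c < n" "snd c < n"
  shows "cell n c \<subseteq> open_unit_square"
proof
  fix y assume y: "y \<in> cell n c"
  have np: "real n > 0" using assms by auto
  have a: "real (fst c) + 1 \<le> real n" "real (snd c) + 1 \<le> real n" using assms by auto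
  have "(real (fst c) + 1) / real n \<le> 1" "(real (snd c) + 1) / real n \<le> 1"
    using a np by auto
  moreover have z: "real (fst c) / real n \<ge> 0" "real (snd c) / real n \<ge> 0" by auto
  ultimately show "y \<in> open_unit_square" using y unfolding cell_def open_unit_square_def
    by (cases y) (auto intro: le_less_trans[OF z(1)] le_less_trans[OF z(2)])
qed

lemma cell_disj:
  assumes "c \<noteq> d" "n > 0"
  shows "cell n c \<inter> cell n d = {}"
proof -
  have np: "real n > 0" using assms by auto
  have iv: "{real a / real n <..< (real a + 1) / real n} \<inter> {real b / real n <..< (real b + 1) / real n} = {}"
    if "a \<noteq> b" for a b
  proof -
    have "real a + 1 \<le> real b \<or> real b + 1 \<le> real a" using that by linarith
    then have "(real a + 1) / real n \<le> real b / real n \<or> (real b + 1) / real n \<le> real a / real n"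
      using np by (auto simp: divide_right_mono)
    then show ?thesis by auto
  qed
  show ?thesis
  proof (cases "fst c = fst d")
    case True
    then have "snd c \<noteq> snd d" using assms(1) by (simp add: prod_eq_iff)
    then show ?thesis using iv[of "snd c" "snd d"] unfolding cell_def by auto
  next
    case False
    then show ?thesis using iv[of "fst c" "fst d"] unfolding cell_def by auto
  qed
qed

lemma corner_rest:
  assumes "n = 2*q" "q \<ge> 2" "j \<in> alphabet n" "\<not> (1 \<le> j \<and> j \<le> 4*n-4)"
  shows "(8*q-3 \<le> j \<and> j \<le> 9*q-5 \<and> fst (corner n e k j) = j + 3 - 7*q \<and> snd (corner n e k j) = 1)
       \<or> (9*q-4 \<le> j \<and> j \<le> 10*q-6 \<and> fst (corner n e k j) = j + 5 - 9*q \<and> snd (corner n e k j) \<in> {1,2})"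
proof -
  have d: "n div 2 = q" using assms by simp
  have j: "8*q-3 \<le> j" "j \<le> 10*q-6" using assms unfolding alphabet_def by auto
  show ?thesis
  proof (cases "j \<le> 9*q-5")
    case True
    then show ?thesis using j assms unfolding corner_def d by auto
  next
    case False
    then show ?thesis using j assms unfolding corner_def d by auto
  qed
qed

lemma corner_inj:
  assumes "even n" "n \<ge> 4" "bij_betw e {1..4*n-4} (boundary_squares n)"
    "i \<in> alphabet n" "j \<in> alphabet n" "i \<noteq> j"
  shows "corner n e k i \<noteq> corner n e k j"
proof -
  obtain q where q: "n = 2*q" using assms(1) by blast
  have q2: "q \<ge> 2" using q assms(2) by simp
  have inj: "inj_on e {1..4*n-4}" using assms(3) by (auto simp: bij_betw_def)
  have bd: "e x \<in> boundary_squares n" if "1 \<le> x \<and> x \<le> 4*n-4" for x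
    using assms(3) that by (auto simp: bij_betw_def)
  have c1: "corner n e k x = e x" if "1 \<le> x \<and> x \<le> 4*n-4" for x
    using that unfolding corner_def by simp
  have nb: "corner n e k x \<notin> boundary_squares n" if "x \<in> alphabet n" "\<not> (1 \<le> x \<and> x \<le> 4*n-4)" for x
  proof -
    from corner_rest[OF q q2 that, of e k]
    have "1 \<le> fst (corner n e k x) \<and> fst (corner n e k x) \<le> n - 2 \<and> snd (corner n e k x) \<in> {1,2}"
      using q q2 by auto
    then show ?thesis using q q2 unfolding boundary_squares_def by auto
  qed
  show ?thesis
  proof (cases "1 \<le> i \<and> i \<le> 4*n-4")
    case Ti: True
    show ?thesis
    proof (cases "1 \<le> j \<and> j \<le> 4*n-4")
      case True
      then show ?thesis using Ti inj assms(6) c1 by (auto simp: inj_on_def)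
    next
      case False
      then show ?thesis using Ti bd[of i] c1[of i] nb[of j] assms(5) by auto
    qed
  next
    case Fi: False
    show ?thesis
    proof (cases "1 \<le> j \<and> j \<le> 4*n-4")
      case True
      then show ?thesis using Fi bd[of j] c1[of j] nb[of i] assms(4) by auto
    next
      case False
      have "fst (corner n e k i) \<noteq> fst (corner n e k j)"
        using corner_rest[OF q q2 assms(4) Fi, of e k] corner_rest[OF q q2 assms(5) False, of e k] assms(6)
        by auto
      then show ?thesis by auto
    qed
  qed
qed

lemma phi_sub:
  assumes "even n" "n \<ge> 4" "bij_betw e {1..4*n-4} (boundary_squares n)"
  shows "w \<in> lists (alphabet n) \<Longrightarrow> phi n e \<eta> w ` open_unit_square \<subseteq> open_unit_square"
proof (induction w arbitrary: \<eta>)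
  case Nil
  then show ?case by simp
next
  case (Cons i w)
  show ?case
  proof
    fix y assume "y \<in> phi n e \<eta> (i # w) ` open_unit_square"
    then obtain x where x: "x \<in> open_unit_square" "y = psi n e (\<eta> []) i (phi n e (\<lambda>u. \<eta> (i # u)) w x)"
      by auto
    have iw: "i \<in> alphabet n" "w \<in> lists (alphabet n)" using Cons.prems by auto
    have "phi n e (\<lambda>u. \<eta> (i # u)) w ` open_unit_square \<subseteq> open_unit_square"
      using Cons.IH iw(2) by blast
    then have "phi n e (\<lambda>u. \<eta> (i # u)) w x \<in> open_unit_square" using x(1) by blast
    then have "y \<in> cell n (corner n e (\<eta> []) i)" using psi_cell[OF assms(1,2)] x(2) by simp
    moreover have "cell n (corner n e (\<eta> []) i) \<subseteq> open_unit_square"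
      using corner_bound[OF assms iw(1)] cell_sub by blast
    ultimately show "y \<in> open_unit_square" by blast
  qed
qed

lemma psi_inj:
  assumes "n > 0" shows "inj (psi n e k j)"
proof (rule injI)
  fix x y assume "psi n e k j x = psi n e k j y"
  then have "(1 / real n) *\<^sub>R x = (1 / real n) *\<^sub>R y" unfolding psi_def by simp
  then show "x = y" using assms by simp
qed

lemma phi_disj:
  assumes "even n" "n \<ge> 4" "bij_betw e {1..4*n-4} (boundary_squares n)"
  shows "w \<in> lists (alphabet n) \<Longrightarrow> v \<in> lists (alphabet n) \<Longrightarrow> length w = length v \<Longrightarrow> w \<noteq> v
    \<Longrightarrow> phi n e \<eta> w ` open_unit_square \<inter> phi n e \<eta> v ` open_unit_square = {}"
proof (induction w arbitrary: v \<eta>)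
  case Nil
  then show ?case by simp
next
  case (Cons i w)
  then obtain j v' where v: "v = j # v'" by (cases v) auto
  let ?f = "psi n e (\<eta> []) i" and ?g = "psi n e (\<eta> []) j"
  show ?case
  proof (cases "i = j")
    case True
    then have "w \<noteq> v'" "length w = length v'" "v' \<in> lists (alphabet n)" "w \<in> lists (alphabet n)"
      using Cons.prems v by auto
    then have d: "phi n e (\<lambda>u. \<eta> (i # u)) w ` open_unit_square \<inter> phi n e (\<lambda>u. \<eta> (i # u)) v' ` open_unit_square = {}"
      using Cons.IH by blast
    have "inj ?f" using psi_inj assms by auto
    then have "?f ` (phi n e (\<lambda>u. \<eta> (i # u)) w ` open_unit_square) \<inter> ?f ` (phi n e (\<lambda>u. \<eta> (i # u)) v' ` open_unit_square) = {}"
      using d by (metis image_Int image_empty)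
    then show ?thesis using True v by (simp add: image_comp)
  next
    case False
    have A: "phi n e \<eta> (i # w) ` open_unit_square \<subseteq> cell n (corner n e (\<eta> []) i)"
    proof
      fix y assume "y \<in> phi n e \<eta> (i # w) ` open_unit_square"
      then obtain x where x: "x \<in> open_unit_square" "y = ?f (phi n e (\<lambda>u. \<eta> (i # u)) w x)" by auto
      have "phi n e (\<lambda>u. \<eta> (i # u)) w x \<in> open_unit_square"
      proof -
        have "w \<in> lists (alphabet n)" using Cons.prems by auto
        then show ?thesis using phi_sub[OF assms, of w "\<lambda>u. \<eta> (i # u)"] x(1) by blast
      qed
      then show "y \<in> cell n (corner n e (\<eta> []) i)" using psi_cell[OF assms(1,2)] x(2) by simp
    qed
    have B: "phi n e \<eta> (j # v') ` open_unit_square \<subseteq> cell n (corner n e (\<eta> []) j)"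
    proof
      fix y assume "y \<in> phi n e \<eta> (j # v') ` open_unit_square"
      then obtain x where x: "x \<in> open_unit_square" "y = ?g (phi n e (\<lambda>u. \<eta> (j # u)) v' x)" by auto
      have "phi n e (\<lambda>u. \<eta> (j # u)) v' x \<in> open_unit_square"
      proof -
        have "v' \<in> lists (alphabet n)" using Cons.prems v by auto
        then show ?thesis using phi_sub[OF assms, of v' "\<lambda>u. \<eta> (j # u)"] x(1) by blast
      qed
      then show "y \<in> cell n (corner n e (\<eta> []) j)" using psi_cell[OF assms(1,2)] x(2) by simp
    qed
    have ij: "i \<in> alphabet n" "j \<in> alphabet n" using Cons.prems v by auto
    have "corner n e (\<eta> []) i \<noteq> corner n e (\<eta> []) j"
      using corner_inj[OF assms ij False] .
    then have "cell n (corner n e (\<eta> []) i) \<inter> cell n (corner n e (\<eta> []) j) = {}"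
      using cell_disj assms(2) by simp
    then show ?thesis using A B v by blast
  qed
qed

theorem lemma4p2:
  fixes n :: nat and e :: "nat \<Rightarrow> nat \<times> nat" and \<eta> :: "nat list \<Rightarrow> nat"
    and m :: nat and w v :: "nat list"
  assumes "even n" and "n \<ge> 4"
    and "bij_betw e {1..4*n-4} (boundary_squares n)"
    and "\<forall>u. \<eta> u \<in> {1, 2}"
    and "w \<in> lists (alphabet n)" and "v \<in> lists (alphabet n)"
    and "length w = m" and "length v = m" and "w \<noteq> v"
  shows "phi n e \<eta> w ` open_unit_square \<inter> phi n e \<eta> v ` open_unit_square = {}
       \<and> phi n e \<eta> w ` open_unit_square \<subseteq> open_unit_square"
  using phi_disj[OF assms(1-3) assms(5,6)] phi_sub[OF assms(1-3) assms(5)] assms(7-9) by simp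

end
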